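(* Let $a=(a_i)_{i\in\mathbb Z}$ be any sequence of complex numbers and $\widehat a$ its dual sequence. For every Young diagram $\mu$, $\omega(s_{\mu;a})=s_{\mu';\widehat a}$, where $\mu'$ is the transposed diagram.
   Context: $\Lambda$ is the algebra of symmetric functions over $\mathbb C$, with complete homogeneous $h_k$, elementary $e_k$, power sums $\mathbf p_k$, Schur functions $s_\mu$. $\omega:\Lambda\to\Lambda$ is the involutive automorphism with $\omega(h_k)=e_k$ (so $\omega(e_k)=h_k$, $\omega(\mathbf p_k)=(-1)^{k-1}\mathbf p_k$, $\omega(s_\mu)=s_{\mu'}$). For a sequence $a=(a_i)_{i\in\mathbb Z}$ define $h_{k;a}=\sum_{i=1}^k(-1)^{k-i}e_{k-i}(a_1,\dots,a_{k-1})h_i$ for $k\ge1$, $h_{0;a}=1$, $h_{k;a}=0$ for $k<0$; let $(\tau^ra)_i=a_{i+r}$; and set $s_{\mu;a}=\det[h_{\mu_i-i+j;\,\tau^{1-j}a}]_{i,j=1}^N$ for any $N\ge\ell(\mu)$. The dual sequence $\widehat a$ is defined by $\widehat a_i=-a_{1-i}$, $i\in\mathbb Z$. *)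

theory Defs
  imports Complex_Main "HOL-Library.Poly_Mapping" "Jordan_Normal_Form.Determinant"
begin

text \<open>The algebra Lambda of symmetric functions over the complex numbers, realised as the
  polynomial ring C[h_1, h_2, ...] in the algebraically independent generators h_k (k >= 1):
  a monomial is a finitely supported exponent vector nat =>0 nat, where variable number
  k-1 stands for h_k.\<close>

type_synonym sym = "(nat \<Rightarrow>\<^sub>0 nat) \<Rightarrow>\<^sub>0 complex"

definition scal :: "complex \<Rightarrow> sym" where
  "scal c = Poly_Mapping.single 0 c"

definition hh :: "int \<Rightarrow> sym" where
  "hh k = (if k = 0 then 1 else if k < 0 then 0
           else Poly_Mapping.single (Poly_Mapping.single (nat k - 1) 1) 1)"

text \<open>Elementary symmetric functions e_k, determined by e_0 = 1 and
  sum_{i=0}^k (-1)^i h_i e_{k-i} = 0 for k >= 1.\<close>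
primrec elist :: "nat \<Rightarrow> sym list" where
  "elist 0 = [1]"
| "elist (Suc n) = elist n @
     [- (\<Sum>i\<in>{1..Suc n}. (-1) ^ i * hh (int i) * (elist n ! (Suc n - i)))]"

definition ee :: "nat \<Rightarrow> sym" where
  "ee k = elist k ! k"

definition omega :: "sym \<Rightarrow> sym" where
  "omega f = (\<Sum>m\<in>Poly_Mapping.keys f. scal (Poly_Mapping.lookup f m) *
                 (\<Prod>v\<in>Poly_Mapping.keys m. ee (Suc v) ^ Poly_Mapping.lookup m v))"

definition esym_seq :: "(int \<Rightarrow> complex) \<Rightarrow> nat \<Rightarrow> nat \<Rightarrow> complex" where
  "esym_seq a n j = (\<Sum>S\<in>{S. S \<subseteq> {1..int n} \<and> card S = j}. \<Prod>i\<in>S. a i)"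

definition hseq :: "int \<Rightarrow> (int \<Rightarrow> complex) \<Rightarrow> sym" where
  "hseq k a = (if k = 0 then 1 else if k < 0 then 0
     else (\<Sum>i\<in>{1..nat k}. scal ((-1) ^ (nat k - i) * esym_seq a (nat k - 1) (nat k - i))
                               * hh (int i)))"

definition shift :: "int \<Rightarrow> (int \<Rightarrow> complex) \<Rightarrow> int \<Rightarrow> complex" where
  "shift r a = (\<lambda>i. a (i + r))"

definition dual_seq :: "(int \<Rightarrow> complex) \<Rightarrow> int \<Rightarrow> complex" where
  "dual_seq a = (\<lambda>i. - a (1 - i))"

definition partition :: "nat list \<Rightarrow> bool" where
  "partition \<mu> \<longleftrightarrow> sorted_wrt (\<ge>) \<mu> \<and> 0 \<notin> set \<mu>"

definition conj_part :: "nat list \<Rightarrow> nat list" where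
  "conj_part \<mu> = (if \<mu> = [] then []
     else map (\<lambda>j. length (filter (\<lambda>p. j \<le> p) \<mu>)) [1..<Suc (hd \<mu>)])"

text \<open>s_{mu;a} = det[h_{mu_i - i + j; tau^{1-j} a}]_{i,j=1..N} with N = length mu
  (0-based indices below).\<close>
definition schur_seq :: "nat list \<Rightarrow> (int \<Rightarrow> complex) \<Rightarrow> sym" where
  "schur_seq \<mu> a = det (mat (length \<mu>) (length \<mu>)
     (\<lambda>(i, j). hseq (int (\<mu> ! i) - int i + int j) (shift (- int j) a)))"

end

theory Submission
  imports Defs "HOL-Computational_Algebra.Polynomial"
begin


definition PM :: "(nat \<Rightarrow>\<^sub>0 nat) \<Rightarrow> sym" where
  "PM m = (\<Prod>v\<in>Poly_Mapping.keys m. ee (Suc v) ^ Poly_Mapping.lookup m v)"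

lemma PM_superset:
  assumes "finite K" "Poly_Mapping.keys m \<subseteq> K"
  shows "PM m = (\<Prod>v\<in>K. ee (Suc v) ^ Poly_Mapping.lookup m v)"
  unfolding PM_def
  by (rule prod.mono_neutral_left) (use assms in \<open>auto simp: in_keys_iff\<close>)

lemma PM_add: "PM (m + m') = PM m * PM m'"
proof -
  let ?K = "Poly_Mapping.keys m \<union> Poly_Mapping.keys m'"
  have f: "finite ?K" by simp
  have "PM (m + m') = (\<Prod>v\<in>?K. ee (Suc v) ^ Poly_Mapping.lookup (m + m') v)"
    by (rule PM_superset[OF f]) (rule keys_add)
  also have "\<dots> = (\<Prod>v\<in>?K. ee (Suc v) ^ Poly_Mapping.lookup m v * ee (Suc v) ^ Poly_Mapping.lookup m' v)"
    by (simp only: lookup_add power_add)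
  also have "\<dots> = (\<Prod>v\<in>?K. ee (Suc v) ^ Poly_Mapping.lookup m v) * (\<Prod>v\<in>?K. ee (Suc v) ^ Poly_Mapping.lookup m' v)"
    by (rule prod.distrib)
  also have "\<dots> = PM m * PM m'"
  proof -
    have e1: "PM m = (\<Prod>v\<in>?K. ee (Suc v) ^ Poly_Mapping.lookup m v)" by (rule PM_superset[OF f]) auto
    have e2: "PM m' = (\<Prod>v\<in>?K. ee (Suc v) ^ Poly_Mapping.lookup m' v)" by (rule PM_superset[OF f]) auto
    show ?thesis unfolding e1 e2 ..
  qed
  finally show ?thesis .
qed

lemma PM_zero[simp]: "PM 0 = 1" by (simp add: PM_def)

lemma scal_0[simp]: "scal 0 = 0" by (simp add: scal_def)
lemma scal_1[simp]: "scal 1 = 1" by (simp add: scal_def)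
lemma scal_add: "scal (c + d) = scal c + scal d" by (simp add: scal_def single_add)
lemma scal_mult: "scal (c * d) = scal c * scal d" by (simp add: scal_def mult_single)
lemma scal_uminus: "scal (- c) = - scal c" by (simp add: scal_def single_uminus)
lemma scal_diff: "scal (c - d) = scal c - scal d" by (simp add: scal_def single_diff)
lemma scal_sum: "scal (\<Sum>i\<in>I. f i) = (\<Sum>i\<in>I. scal (f i))"
  by (induct I rule: infinite_finite_induct) (auto simp: scal_add)

lemma omega_superset:
  assumes "finite K" "Poly_Mapping.keys f \<subseteq> K"
  shows "omega f = (\<Sum>m\<in>K. scal (Poly_Mapping.lookup f m) * PM m)"
  unfolding omega_def PM_def[symmetric]
  by (rule sum.mono_neutral_left) (use assms in \<open>auto simp: in_keys_iff\<close>)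

lemma omega_add: "omega (f + g) = omega f + omega g"
proof -
  let ?K = "Poly_Mapping.keys f \<union> Poly_Mapping.keys g"
  have fK: "finite ?K" by simp
  have "omega (f + g) = (\<Sum>m\<in>?K. scal (Poly_Mapping.lookup (f + g) m) * PM m)"
    by (rule omega_superset[OF fK]) (rule keys_add)
  also have "\<dots> = (\<Sum>m\<in>?K. scal (Poly_Mapping.lookup f m) * PM m + scal (Poly_Mapping.lookup g m) * PM m)"
    by (simp only: lookup_add scal_add distrib_right)
  also have "\<dots> = (\<Sum>m\<in>?K. scal (Poly_Mapping.lookup f m) * PM m) + (\<Sum>m\<in>?K. scal (Poly_Mapping.lookup g m) * PM m)"
    by (rule sum.distrib)
  also have "\<dots> = omega f + omega g"
  proof -
    have e1: "omega f = (\<Sum>m\<in>?K. scal (Poly_Mapping.lookup f m) * PM m)" by (rule omega_superset[OF fK]) auto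
    have e2: "omega g = (\<Sum>m\<in>?K. scal (Poly_Mapping.lookup g m) * PM m)" by (rule omega_superset[OF fK]) auto
    show ?thesis unfolding e1 e2 ..
  qed
  finally show ?thesis .
qed

lemma omega_zero[simp]: "omega 0 = 0" by (simp add: omega_def)

lemma omega_single: "omega (Poly_Mapping.single m c) = scal c * PM m"
  by (simp add: omega_def PM_def)

lemma update_as_add:
  assumes "a \<notin> Poly_Mapping.keys f"
  shows "Poly_Mapping.update a b f = f + Poly_Mapping.single a b"
  by (rule poly_mapping_eqI) (use assms in \<open>auto simp: lookup_update lookup_add lookup_single in_keys_iff when_def\<close>)

lemma omega_single_mult: "omega (Poly_Mapping.single a b * g) = scal b * PM a * omega g"
proof (induct g rule: update_induct)
  case const
  then show ?case by (simp only: mult_zero_right omega_zero)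
next
  case (update f c d)
  have "omega (Poly_Mapping.single a b * Poly_Mapping.update c d f) =
      omega (Poly_Mapping.single a b * f) + omega (Poly_Mapping.single (a + c) (b * d))"
    by (simp only: update_as_add[OF update(1)] distrib_left mult_single omega_add)
  also have "\<dots> = scal b * PM a * omega f + scal b * PM a * (scal d * PM c)"
    unfolding update(3) by (simp only: omega_single scal_mult PM_add mult_ac)
  also have "\<dots> = scal b * PM a * omega (Poly_Mapping.update c d f)"
    by (simp only: update_as_add[OF update(1)] omega_add omega_single distrib_left)
  finally show ?case .
qed

lemma omega_mult: "omega (f * g) = omega f * omega g"
proof (induct f rule: update_induct)
  case const
  then show ?case by (simp only: mult_zero_left omega_zero)
next
  case (update f c d)
  have "omega (Poly_Mapping.update c d f * g) = omega (f * g) + omega (Poly_Mapping.single c d * g)"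
    by (simp only: update_as_add[OF update(1)] distrib_right omega_add)
  also have "\<dots> = omega f * omega g + scal d * PM c * omega g"
    by (simp only: update(3) omega_single_mult)
  also have "\<dots> = omega (Poly_Mapping.update c d f) * omega g"
    by (simp only: update_as_add[OF update(1)] omega_add omega_single distrib_right)
  finally show ?case .
qed

lemma omega_one: "omega 1 = 1"
  using omega_single[of 0 1] by simp

interpretation omega_hom: comm_ring_hom omega
  by unfold_locales (auto simp: omega_add omega_mult omega_one)

lemma omega_scal[simp]: "omega (scal c) = scal c"
  by (simp add: scal_def omega_single)

lemma omega_hh: "k > 0 \<Longrightarrow> omega (hh k) = ee (nat k)"
  by (simp add: hh_def omega_single PM_def)


lemma length_elist[simp]: "length (elist n) = Suc n"
  by (induct n) auto

lemma elist_nth: "k \<le> n \<Longrightarrow> elist n ! k = ee k"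
proof (induct n)
  case 0
  then show ?case by (simp add: ee_def)
next
  case (Suc n)
  show ?case
  proof (cases "k = Suc n")
    case True
    then show ?thesis by (simp add: ee_def)
  next
    case False
    then have "k \<le> n" using Suc by auto
    then have "elist (Suc n) ! k = elist n ! k"
      by (simp add: nth_append)
    then show ?thesis using Suc \<open>k \<le> n\<close> by simp
  qed
qed

lemma ee_0[simp]: "ee 0 = 1" by (simp add: ee_def)

lemma ee_Suc: "ee (Suc n) = - (\<Sum>i\<in>{1..Suc n}. (-1) ^ i * hh (int i) * ee (Suc n - i))"
proof -
  have "ee (Suc n) = elist (Suc n) ! Suc n" by (simp add: ee_def)
  also have "\<dots> = - (\<Sum>i\<in>{1..Suc n}. (-1) ^ i * hh (int i) * (elist n ! (Suc n - i)))"
    by (simp add: nth_append)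
  also have "\<dots> = - (\<Sum>i\<in>{1..Suc n}. (-1) ^ i * hh (int i) * ee (Suc n - i))"
    by (intro arg_cong[where f=uminus] sum.cong refl, subst elist_nth) auto
  finally show ?thesis .
qed

lemma neg1_pow_diff: "r \<le> k \<Longrightarrow> ((-1::'a::comm_ring_1) ^ (k - r)) = (-1) ^ k * (-1) ^ r"
proof -
  assume "r \<le> k"
  then have "(-1::'a) ^ k = (-1) ^ (k - r) * (-1) ^ r" by (metis le_add_diff_inverse2 power_add)
  then have "(-1::'a) ^ k * (-1) ^ r = (-1) ^ (k - r) * ((-1) ^ r * (-1) ^ r)" by (simp add: mult.assoc)
  also have "(-1::'a) ^ r * (-1) ^ r = 1" by (simp flip: power_add)
  finally show ?thesis by simp
qed

lemma HE: "(\<Sum>r\<in>{1..k}. hh (int r) * (-1) ^ (k - r) * ee (k + 1 - r)) = hh (1 + int k) - (-1) ^ k * ee (k + 1)"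
proof -
  have s: "{1..Suc k} = insert (Suc k) {1..k}" by auto
  have "ee (Suc k) = - (\<Sum>i\<in>{1..Suc k}. (-1) ^ i * hh (int i) * ee (Suc k - i))"
    by (rule ee_Suc)
  also have "(\<Sum>i\<in>{1..Suc k}. (-1) ^ i * hh (int i) * ee (Suc k - i)) =
      (-1) ^ Suc k * hh (int (Suc k)) * ee 0 + (\<Sum>i\<in>{1..k}. (-1) ^ i * hh (int i) * ee (Suc k - i))"
    unfolding s by (subst sum.insert) auto
  finally have e: "ee (Suc k) = - ((-1) ^ Suc k * hh (int (Suc k)) + (\<Sum>i\<in>{1..k}. (-1) ^ i * hh (int i) * ee (Suc k - i)))"
    by simp
  have "(\<Sum>r\<in>{1..k}. hh (int r) * (-1) ^ (k - r) * ee (k + 1 - r)) =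
        (-1) ^ k * (\<Sum>i\<in>{1..k}. (-1) ^ i * hh (int i) * ee (Suc k - i))"
    unfolding sum_distrib_left by (rule sum.cong) (auto simp: neg1_pow_diff mult_ac)
  also have "(\<Sum>i\<in>{1..k}. (-1) ^ i * hh (int i) * ee (Suc k - i)) = - ee (Suc k) - (-1) ^ Suc k * hh (int (Suc k))"
    using e by (simp add: algebra_simps)
  also have "(-1) ^ k * (- ee (Suc k) - (-1) ^ Suc k * hh (int (Suc k))) = hh (int (Suc k)) - (-1) ^ k * ee (Suc k)"
    by (simp add: algebra_simps flip: power_add)
  finally show ?thesis by simp
qed


definition es :: "(int \<Rightarrow> complex) \<Rightarrow> int set \<Rightarrow> nat \<Rightarrow> complex" where
  "es b F r = (\<Sum>S\<in>{S. S \<subseteq> F \<and> card S = r}. \<Prod>i\<in>S. b i)"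

definition PP :: "(int \<Rightarrow> complex) \<Rightarrow> int set \<Rightarrow> complex poly" where
  "PP b F = (\<Prod>p\<in>F. [:- b p, 1:])"

lemma es_0: "finite F \<Longrightarrow> es b F 0 = 1"
proof -
  assume F: "finite F"
  have "{S. S \<subseteq> F \<and> card S = 0} = {{}}"
  proof (intro equalityI subsetI)
    fix S assume "S \<in> {S. S \<subseteq> F \<and> card S = 0}"
    then have "S \<subseteq> F" "card S = 0" by simp_all
    moreover have "finite S" using \<open>S \<subseteq> F\<close> F by (rule finite_subset)
    ultimately show "S \<in> {{}}" by simp
  qed simp
  then show ?thesis by (simp add: es_def)
qed

lemma es_big: "finite F \<Longrightarrow> card F < r \<Longrightarrow> es b F r = 0"
proof -
  assume F: "finite F" and r: "card F < r"
  have E: "{S. S \<subseteq> F \<and> card S = r} = {}"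
  proof (intro equalityI subsetI)
    fix S assume "S \<in> {S. S \<subseteq> F \<and> card S = r}"
    then have "S \<subseteq> F" "card S = r" by simp_all
    then have "card S \<le> card F" using card_mono[OF F] by blast
    then show "S \<in> {}" using r \<open>card S = r\<close> by simp
  qed simp
  show ?thesis unfolding es_def E by simp
qed

lemma es_insert:
  assumes F: "finite F" and x: "x \<notin> F"
  shows "es b (insert x F) (Suc r) = es b F (Suc r) + b x * es b F r"
proof -
  have eq: "{S. S \<subseteq> insert x F \<and> card S = Suc r} =
      {S. S \<subseteq> F \<and> card S = Suc r} \<union> insert x ` {S. S \<subseteq> F \<and> card S = r}"
  proof (intro equalityI subsetI)
    fix S assume "S \<in> {S. S \<subseteq> insert x F \<and> card S = Suc r}"
    then have S: "S \<subseteq> insert x F" "card S = Suc r" by auto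
    have fS: "finite S" using S(1) F finite_subset by blast
    show "S \<in> {S. S \<subseteq> F \<and> card S = Suc r} \<union> insert x ` {S. S \<subseteq> F \<and> card S = r}"
    proof (cases "x \<in> S")
      case True
      then have "S = insert x (S - {x})" by auto
      moreover have "S - {x} \<subseteq> F" using S(1) by auto
      moreover have "card (S - {x}) = r" using S(2) True fS by simp
      ultimately show ?thesis by blast
    next
      case False
      then show ?thesis using S by auto
    qed
  next
    fix S assume "S \<in> {S. S \<subseteq> F \<and> card S = Suc r} \<union> insert x ` {S. S \<subseteq> F \<and> card S = r}"
    then show "S \<in> {S. S \<subseteq> insert x F \<and> card S = Suc r}"
    proof
      assume "S \<in> {S. S \<subseteq> F \<and> card S = Suc r}" then show ?thesis by auto
    next
      assume "S \<in> insert x ` {S. S \<subseteq> F \<and> card S = r}"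
      then obtain T where T: "S = insert x T" "T \<subseteq> F" "card T = r" by auto
      have "finite T" using T F finite_subset by blast
      moreover have "x \<notin> T" using T(2) x by auto
      ultimately have "card S = Suc r" using T by simp
      then show ?thesis using T by auto
    qed
  qed
  have disj: "{S. S \<subseteq> F \<and> card S = Suc r} \<inter> insert x ` {S. S \<subseteq> F \<and> card S = r} = {}"
    using x by auto
  have inj: "inj_on (insert x) {S. S \<subseteq> F \<and> card S = r}"
  proof (rule inj_onI)
    fix S T assume "S \<in> {S. S \<subseteq> F \<and> card S = r}" "T \<in> {S. S \<subseteq> F \<and> card S = r}" "insert x S = insert x T"
    moreover have "x \<notin> S" "x \<notin> T" using calculation x by auto
    ultimately show "S = T" by (metis insert_ident)
  qed
  have fin1: "finite {S. S \<subseteq> F \<and> card S = Suc r}" using F by simp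
  have fin2: "finite (insert x ` {S. S \<subseteq> F \<and> card S = r})" using F by simp
  have "es b (insert x F) (Suc r) = es b F (Suc r) +
      (\<Sum>S\<in>insert x ` {S. S \<subseteq> F \<and> card S = r}. \<Prod>i\<in>S. b i)"
    unfolding es_def eq by (rule sum.union_disjoint[OF fin1 fin2 disj])
  also have "(\<Sum>S\<in>insert x ` {S. S \<subseteq> F \<and> card S = r}. \<Prod>i\<in>S. b i) =
      (\<Sum>S\<in>{S. S \<subseteq> F \<and> card S = r}. \<Prod>i\<in>insert x S. b i)"
    by (rule sum.reindex[OF inj, unfolded comp_def])
  also have "\<dots> = (\<Sum>S\<in>{S. S \<subseteq> F \<and> card S = r}. b x * (\<Prod>i\<in>S. b i))"
  proof (rule sum.cong[OF refl])
    fix S assume "S \<in> {S. S \<subseteq> F \<and> card S = r}"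
    then have "finite S" "x \<notin> S" using F x finite_subset by auto
    then show "(\<Prod>i\<in>insert x S. b i) = b x * (\<Prod>i\<in>S. b i)" by simp
  qed
  also have "\<dots> = b x * es b F r" by (simp add: es_def sum_distrib_left)
  finally show ?thesis .
qed

lemma es_reindex:
  assumes "inj_on f A"
  shows "es (b \<circ> f) A r = es b (f ` A) r"
proof -
  have inj: "inj_on ((`) f) {S. S \<subseteq> A \<and> card S = r}"
    using inj_on_image_Pow[OF assms] by (rule inj_on_subset) auto
  have img: "(`) f ` {S. S \<subseteq> A \<and> card S = r} = {S. S \<subseteq> f ` A \<and> card S = r}"
  proof (intro equalityI subsetI)
    fix T assume "T \<in> (`) f ` {S. S \<subseteq> A \<and> card S = r}"
    then obtain S where "T = f ` S" "S \<subseteq> A" "card S = r" by auto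
    then show "T \<in> {S. S \<subseteq> f ` A \<and> card S = r}"
      using assms by (auto simp: card_image inj_on_subset)
  next
    fix T assume "T \<in> {S. S \<subseteq> f ` A \<and> card S = r}"
    then have T: "T \<subseteq> f ` A" "card T = r" by auto
    define S where "S = {a \<in> A. f a \<in> T}"
    have "T = f ` S" using T(1) unfolding S_def by auto
    moreover have "S \<subseteq> A" unfolding S_def by auto
    moreover have "card S = r"
      using T \<open>T = f ` S\<close> \<open>S \<subseteq> A\<close> assms by (metis card_image inj_on_subset)
    ultimately show "T \<in> (`) f ` {S. S \<subseteq> A \<and> card S = r}" by blast
  qed
  have "es b (f ` A) r = (\<Sum>T\<in>(`) f ` {S. S \<subseteq> A \<and> card S = r}. \<Prod>i\<in>T. b i)"
    unfolding es_def img ..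
  also have "\<dots> = (\<Sum>S\<in>{S. S \<subseteq> A \<and> card S = r}. \<Prod>i\<in>f ` S. b i)"
    by (rule sum.reindex[OF inj, unfolded comp_def])
  also have "\<dots> = (\<Sum>S\<in>{S. S \<subseteq> A \<and> card S = r}. \<Prod>i\<in>S. b (f i))"
  proof (rule sum.cong[OF refl])
    fix S assume "S \<in> {S. S \<subseteq> A \<and> card S = r}"
    then have "inj_on f S" using assms inj_on_subset by auto
    then show "prod b (f ` S) = (\<Prod>i\<in>S. b (f i))" by (simp add: prod.reindex)
  qed
  finally show ?thesis by (simp add: es_def)
qed

lemma es_neg: "es (\<lambda>i. - b i) F r = (-1) ^ r * es b F r"
proof -
  have "(\<Prod>i\<in>S. - b i) = (-1) ^ r * (\<Prod>i\<in>S. b i)" if "card S = r" for S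
  proof -
    have "(\<Prod>i\<in>S. - b i) = (\<Prod>i\<in>S. (-1) * b i)" by simp
    also have "\<dots> = (-1) ^ card S * (\<Prod>i\<in>S. b i)"
      by (simp only: prod.distrib prod_constant)
    finally show ?thesis using that by simp
  qed
  then show ?thesis by (simp add: es_def sum_distrib_left)
qed

lemma coeff_lin_0: "coeff ([:c, 1:] * q) 0 = c * coeff q 0" for c :: complex by simp
lemma coeff_lin_Suc: "coeff ([:c, 1:] * q) (Suc m) = c * coeff q (Suc m) + coeff q m" for c :: complex
  by simp

lemma PP_empty[simp]: "PP b {} = 1" by (simp add: PP_def)
lemma PP_insert: "finite F \<Longrightarrow> x \<notin> F \<Longrightarrow> PP b (insert x F) = [:- b x, 1:] * PP b F"
  by (simp add: PP_def)

lemma PP_degree: "finite F \<Longrightarrow> degree (PP b F) \<le> card F"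
proof -
  assume F: "finite F"
  have "degree (PP b F) \<le> sum (degree \<circ> (\<lambda>p. [:- b p, 1:])) F"
    unfolding PP_def by (rule degree_prod_sum_le[OF F])
  also have "\<dots> = card F" by simp
  finally show ?thesis .
qed

lemma PP_coeff_big: "finite F \<Longrightarrow> card F < j \<Longrightarrow> coeff (PP b F) j = 0"
  using PP_degree by (metis coeff_eq_0 le_less_trans)

lemma vieta:
  assumes "finite F"
  shows "r \<le> card F \<Longrightarrow> coeff (PP b F) (card F - r) = (-1) ^ r * es b F r"
  using assms
proof (induct F arbitrary: r rule: finite_induct)
  case empty
  then show ?case by (simp add: es_0)
next
  case (insert x F)
  let ?d = "card F"
  have cI: "card (insert x F) = Suc ?d" using insert by simp
  have PPI: "PP b (insert x F) = [:- b x, 1:] * PP b F" using insert by (simp add: PP_insert)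
  show ?case
  proof (cases "r = Suc ?d")
    case True
    have "coeff (PP b (insert x F)) (card (insert x F) - r) = - b x * coeff (PP b F) 0"
      using True cI PPI by simp
    also have "coeff (PP b F) 0 = (-1) ^ ?d * es b F ?d"
      using insert(3)[of ?d] by simp
    also have "es b (insert x F) r = b x * es b F ?d"
      using True es_insert[OF insert(1,2), of b ?d] es_big[OF insert(1), of "Suc ?d"] by simp
    ultimately show ?thesis using True by simp
  next
    case False
    then have r: "r \<le> ?d" using insert(4) cI by simp
    have idx: "card (insert x F) - r = Suc (?d - r)" using r cI by simp
    have c1: "coeff (PP b F) (?d - r) = (-1) ^ r * es b F r" using insert(3)[OF r] .
    show ?thesis
    proof (cases r)
      case 0
      have "coeff (PP b F) (Suc ?d) = 0" by (rule PP_coeff_big[OF insert(1)]) simp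
      then show ?thesis using 0 idx PPI c1 insert(1,2) by (simp add: es_0)
    next
      case (Suc r')
      have i2: "Suc (?d - r) = ?d - r'" using Suc r by simp
      have c2: "coeff (PP b F) (?d - r') = (-1) ^ r' * es b F r'" using insert(3)[of r'] r Suc by simp
      have "coeff (PP b (insert x F)) (card (insert x F) - r) =
          - b x * coeff (PP b F) (Suc (?d - r)) + coeff (PP b F) (?d - r)"
        unfolding idx PPI coeff_lin_Suc ..
      also have "\<dots> = - b x * ((-1) ^ r' * es b F r') + (-1) ^ r * es b F r"
        unfolding i2 c2 c1 ..
      also have "\<dots> = (-1) ^ r * es b (insert x F) r"
        using es_insert[OF insert(1,2), of b r'] Suc by (simp add: algebra_simps)
      finally show ?thesis .
    qed
  qed
qed

lemma vieta':
  assumes "finite F" "j \<le> card F"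
  shows "coeff (PP b F) j = (-1) ^ (card F - j) * es b F (card F - j)"
  using vieta[OF assms(1), of "card F - j" b] assms(2) by simp

lemma PP_split_top:
  assumes "l \<le> u + 1"
  shows "PP b {l..u + 1} = [:- b (u + 1), 1:] * PP b {l..u}"
proof -
  have "{l..u + 1} = insert (u + 1) {l..u}" using assms by auto
  then show ?thesis by (simp add: PP_insert)
qed

lemma tele_h:
  fixes y h :: int
  assumes "y \<le> h"
  shows "(\<Sum>z\<in>{y+1..h}. coeff (PP a {z+1..h}) i * coeff (PP a {y+1..z-1}) j)
         = coeff (PP a {y+1..h}) (i + j + 1)"
  using assms
proof (induct h arbitrary: i rule: int_ge_induct)
  case base
  then show ?case by simp
next
  case (step h)
  let ?L = "[:- a (h + 1), 1:]"
  let ?P = "PP a {y+1..h}"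
  let ?g = "\<lambda>z. coeff (PP a {y+1..z-1}) j"
  have Iset: "{y+1..h+1} = insert (h+1) {y+1..h}" using step(1) by auto
  have PPtop: "PP a {y+1..h+1} = ?L * ?P" by (rule PP_split_top) (use step(1) in simp)
  have PPz: "PP a {z+1..h+1} = ?L * PP a {z+1..h}" if "z \<in> {y+1..h}" for z
    by (rule PP_split_top) (use that in simp)
  have last: "PP a {h+1+1..h+1} = 1" by simp
  have gx: "?g (h + 1) = coeff ?P j" by simp
  have "(\<Sum>z\<in>{y+1..h+1}. coeff (PP a {z+1..h+1}) i * ?g z)
      = coeff (PP a {h+1+1..h+1}) i * ?g (h+1) + (\<Sum>z\<in>{y+1..h}. coeff (PP a {z+1..h+1}) i * ?g z)"
    unfolding Iset by (rule sum.insert) auto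
  also have "\<dots> = coeff 1 i * coeff ?P j + (\<Sum>z\<in>{y+1..h}. coeff (?L * PP a {z+1..h}) i * ?g z)"
    unfolding last gx by (intro arg_cong2[where f="(+)"] refl sum.cong) (simp_all add: PPz)
  also have "\<dots> = coeff (?L * ?P) (i + j + 1)"
  proof (cases i)
    case 0
    have "(\<Sum>z\<in>{y+1..h}. coeff (?L * PP a {z+1..h}) i * ?g z)
        = - a (h+1) * (\<Sum>z\<in>{y+1..h}. coeff (PP a {z+1..h}) 0 * ?g z)"
      unfolding 0 coeff_lin_0 sum_distrib_left by (simp add: mult.assoc)
    also have "\<dots> = - a (h+1) * coeff ?P (0 + j + 1)" using step(2)[of 0] by simp
    finally show ?thesis using 0 by simp
  next
    case (Suc i')
    have "(\<Sum>z\<in>{y+1..h}. coeff (?L * PP a {z+1..h}) i * ?g z)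
        = - a (h+1) * (\<Sum>z\<in>{y+1..h}. coeff (PP a {z+1..h}) (Suc i') * ?g z)
          + (\<Sum>z\<in>{y+1..h}. coeff (PP a {z+1..h}) i' * ?g z)"
      unfolding Suc coeff_lin_Suc sum_distrib_left sum.distrib[symmetric]
      by (rule sum.cong) (simp_all add: algebra_simps)
    also have "\<dots> = - a (h+1) * coeff ?P (Suc i' + j + 1) + coeff ?P (i' + j + 1)"
      using step(2)[of "Suc i'"] step(2)[of i'] by simp
    also have "\<dots> = coeff (?L * ?P) (i + j + 1)"
      unfolding Suc by (simp add: coeff_lin_Suc)
    finally show ?thesis using Suc by simp
  qed
  finally show ?case unfolding PPtop .
qed

lemma tele:
  fixes x y :: int
  assumes "y < x"
  shows "(\<Sum>z\<in>{y+1..x-1}. coeff (PP a {z+1..x-1}) i * coeff (PP a {y+1..z-1}) j)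
         = coeff (PP a {y+1..x-1}) (i + j + 1)"
  by (rule tele_h) (use assms in simp)


definition LLs :: "complex poly \<Rightarrow> nat \<Rightarrow> sym" where
  "LLs p K = (\<Sum>j<K. scal (coeff p j) * hh (1 + int j))"

definition OTs :: "complex poly \<Rightarrow> nat \<Rightarrow> sym" where
  "OTs p K = (\<Sum>j<K. (-1) ^ j * scal (coeff p j) * ee (j + 1))"

lemma LLs_ext: "degree p < K \<Longrightarrow> K \<le> K' \<Longrightarrow> LLs p K' = LLs p K"
  unfolding LLs_def by (rule sum.mono_neutral_right) (auto simp: coeff_eq_0)

lemma OTs_ext: "degree p < K \<Longrightarrow> K \<le> K' \<Longrightarrow> OTs p K' = OTs p K"
  unfolding OTs_def by (rule sum.mono_neutral_right) (auto simp: coeff_eq_0)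

lemma scal_neg1_pow: "scal ((-1) ^ m) = (-1) ^ m"
  by (induct m) (simp_all add: scal_mult scal_uminus)

lemma esym_es: "esym_seq c n r = es c {1..int n} r"
  by (simp add: esym_seq_def es_def)

lemma card_int_ivl: "card {y+1..x-1::int} = nat (x - y) - 1"
  by simp

lemma hseq_PP:
  fixes x y :: int
  assumes "y < x"
  shows "hseq (x - y) (shift y b) = LLs (PP b {y+1..x-1}) (nat (x - y))"
proof -
  define k where "k = nat (x - y)"
  define F where "F = {y+1..x-1}"
  have k1: "k \<ge> 1" using assms unfolding k_def by simp
  have fF: "finite F" unfolding F_def by simp
  have cF: "card F = k - 1" unfolding F_def k_def by simp
  have img: "(\<lambda>l. l + y) ` {1..int (k - 1)} = F"
  proof (intro equalityI subsetI)
    fix z assume "z \<in> (\<lambda>l. l + y) ` {1..int (k - 1)}"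
    then show "z \<in> F" unfolding F_def k_def using assms by auto
  next
    fix z assume z: "z \<in> F"
    then have "z - y \<in> {1..int (k - 1)}" unfolding F_def k_def using assms by auto
    moreover have "z = (z - y) + y" by simp
    ultimately show "z \<in> (\<lambda>l. l + y) ` {1..int (k - 1)}" by blast
  qed
  have es_eq: "esym_seq (shift y b) (k - 1) r = es b F r" for r
  proof -
    have "shift y b = b \<circ> (\<lambda>l. l + y)" by (simp add: shift_def comp_def)
    then have "esym_seq (shift y b) (k - 1) r = es (b \<circ> (\<lambda>l. l + y)) {1..int (k - 1)} r"
      unfolding esym_es by simp
    also have "\<dots> = es b ((\<lambda>l. l + y) ` {1..int (k - 1)}) r"
      by (rule es_reindex) (simp add: inj_on_def)
    finally show ?thesis unfolding img .
  qed
  have "hseq (x - y) (shift y b) = (\<Sum>i\<in>{1..k}. scal ((-1) ^ (k - i) * esym_seq (shift y b) (k - 1) (k - i)) * hh (int i))"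
    using assms unfolding hseq_def k_def by simp
  also have "\<dots> = (\<Sum>j<k. scal ((-1) ^ (k - Suc j) * es b F (k - Suc j)) * hh (int (Suc j)))"
    unfolding es_eq by (subst sum.atLeast1_atMost_eq[symmetric]) simp
  also have "\<dots> = (\<Sum>j<k. scal (coeff (PP b F) j) * hh (1 + int j))"
  proof (rule sum.cong[OF refl])
    fix j assume "j \<in> {..<k}"
    then have j: "j \<le> card F" using cF k1 by auto
    have "k - Suc j = card F - j" using cF by simp
    then show "scal ((-1) ^ (k - Suc j) * es b F (k - Suc j)) * hh (int (Suc j)) =
        scal (coeff (PP b F) j) * hh (1 + int j)"
      using vieta'[OF fF j, of b] by simp
  qed
  finally show ?thesis unfolding LLs_def k_def F_def .
qed

lemma omega_hseq_PP:
  fixes x y :: int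
  assumes "y < x"
  shows "(-1) ^ nat (x - y) * omega (hseq (x - y) (shift (1 - x) (dual_seq b)))
       = - OTs (PP b {y+1..x-1}) (nat (x - y))"
proof -
  define k where "k = nat (x - y)"
  define F where "F = {y+1..x-1}"
  have k1: "k \<ge> 1" using assms unfolding k_def by simp
  have fF: "finite F" unfolding F_def by simp
  have cF: "card F = k - 1" unfolding F_def k_def by simp
  have img: "(\<lambda>l. x - l) ` {1..int (k - 1)} = F"
  proof (intro equalityI subsetI)
    fix z assume "z \<in> (\<lambda>l. x - l) ` {1..int (k - 1)}"
    then show "z \<in> F" unfolding F_def k_def using assms by auto
  next
    fix z assume z: "z \<in> F"
    then have "x - z \<in> {1..int (k - 1)}" unfolding F_def k_def using assms by auto
    moreover have "z = x - (x - z)" by simp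
    ultimately show "z \<in> (\<lambda>l. x - l) ` {1..int (k - 1)}" by blast
  qed
  have es_eq: "esym_seq (shift (1 - x) (dual_seq b)) (k - 1) r = (-1) ^ r * es b F r" for r
  proof -
    have "shift (1 - x) (dual_seq b) = (\<lambda>l. - (b \<circ> (\<lambda>l. x - l)) l)"
      by (simp add: shift_def dual_seq_def comp_def)
    then have "esym_seq (shift (1 - x) (dual_seq b)) (k - 1) r = es (\<lambda>l. - (b \<circ> (\<lambda>l. x - l)) l) {1..int (k - 1)} r"
      unfolding esym_es by simp
    also have "\<dots> = (-1) ^ r * es (b \<circ> (\<lambda>l. x - l)) {1..int (k - 1)} r"
      by (rule es_neg)
    also have "es (b \<circ> (\<lambda>l. x - l)) {1..int (k - 1)} r = es b ((\<lambda>l. x - l) ` {1..int (k - 1)}) r"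
      by (rule es_reindex) (simp add: inj_on_def)
    finally show ?thesis unfolding img .
  qed
  have om: "omega (hseq (x - y) c) = (\<Sum>i\<in>{1..k}. scal ((-1) ^ (k - i) * esym_seq c (k - 1) (k - i)) * ee i)" for c
  proof -
    have "omega (hseq (x - y) c) = omega (\<Sum>i\<in>{1..k}. scal ((-1) ^ (k - i) * esym_seq c (k - 1) (k - i)) * hh (int i))"
      using assms unfolding hseq_def k_def by simp
    also have "\<dots> = (\<Sum>i\<in>{1..k}. scal ((-1) ^ (k - i) * esym_seq c (k - 1) (k - i)) * ee i)"
      by (simp add: omega_hom.hom_sum omega_mult omega_hh)
    finally show ?thesis .
  qed
  have "omega (hseq (x - y) (shift (1 - x) (dual_seq b))) =
      (\<Sum>j<k. scal ((-1) ^ (k - Suc j) * ((-1) ^ (k - Suc j) * es b F (k - Suc j))) * ee (Suc j))"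
    unfolding om es_eq by (subst sum.atLeast1_atMost_eq[symmetric]) simp
  also have "\<dots> = (\<Sum>j<k. scal (es b F (k - Suc j)) * ee (Suc j))"
    by (simp add: mult.assoc[symmetric] flip: power_add)
  finally have o1: "omega (hseq (x - y) (shift (1 - x) (dual_seq b))) = (\<Sum>j<k. scal (es b F (k - Suc j)) * ee (Suc j))" .
  obtain m where km: "k = Suc m" using k1 by (cases k) auto
  have "(-1) ^ k * omega (hseq (x - y) (shift (1 - x) (dual_seq b))) =
      (\<Sum>j<k. - ((-1) ^ j * scal (coeff (PP b F) j) * ee (j + 1)))"
    unfolding o1 sum_distrib_left
  proof (rule sum.cong[OF refl])
    fix j assume "j \<in> {..<k}"
    then have j: "j \<le> card F" "j \<le> m" using cF km by auto
    have cm: "card F - j = m - j" using cF km by simp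
    have "coeff (PP b F) j = (-1) ^ (m - j) * es b F (m - j)" using vieta'[OF fF j(1), of b] cm by simp
    then have "es b F (m - j) = (-1) ^ (m - j) * coeff (PP b F) j"
      by (simp add: mult.assoc[symmetric] flip: power_add)
    then have "scal (es b F (k - Suc j)) = (-1) ^ (m - j) * scal (coeff (PP b F) j)"
      using km by (simp add: scal_mult scal_neg1_pow)
    moreover have "(-1::sym) ^ k * (-1) ^ (m - j) = - ((-1) ^ j)"
      using km j(2) by (simp add: neg1_pow_diff mult.assoc[symmetric] flip: power_add)
        (simp add: power_add)
    ultimately show "(-1) ^ k * (scal (es b F (k - Suc j)) * ee (Suc j)) =
        - ((-1) ^ j * scal (coeff (PP b F) j) * ee (j + 1))"
      by (simp add: mult.assoc[symmetric])
  qed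
  also have "\<dots> = - OTs (PP b F) k" by (simp add: OTs_def sum_negf)
  finally show ?thesis unfolding k_def F_def .
qed

lemma tri_sum:
  fixes c X Y :: "nat \<Rightarrow> 'a::comm_ring_1"
  shows "(\<Sum>k<K. c k * (\<Sum>i<k. X i * Y (k - 1 - i))) = (\<Sum>i<K. \<Sum>j<K - 1 - i. c (i + j + 1) * X i * Y j)"
proof (induct K)
  case 0 then show ?case by simp
next
  case (Suc K)
  have "(\<Sum>i<Suc K. \<Sum>j<Suc K - 1 - i. c (i + j + 1) * X i * Y j) =
      (\<Sum>i<K. \<Sum>j<Suc (K - 1 - i). c (i + j + 1) * X i * Y j)"
    by (simp add: Suc_diff_Suc)
  also have "\<dots> = (\<Sum>i<K. (\<Sum>j<K - 1 - i. c (i + j + 1) * X i * Y j) + c K * X i * Y (K - 1 - i))"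
    by (rule sum.cong) auto
  also have "\<dots> = (\<Sum>i<K. \<Sum>j<K - 1 - i. c (i + j + 1) * X i * Y j) + c K * (\<Sum>i<K. X i * Y (K - 1 - i))"
    by (simp add: sum.distrib sum_distrib_left mult.assoc)
  finally show ?case using Suc by simp
qed

lemma dsum:
  fixes c X Y :: "nat \<Rightarrow> 'a::comm_ring_1"
  assumes "\<forall>m\<ge>K. c m = 0"
  shows "(\<Sum>i<K. \<Sum>j<K. c (i + j + 1) * X i * Y j) = (\<Sum>k<K. c k * (\<Sum>i<k. X i * Y (k - 1 - i)))"
  unfolding tri_sum
proof (rule sum.cong[OF refl])
  fix i assume "i \<in> {..<K}"
  show "(\<Sum>j<K. c (i + j + 1) * X i * Y j) = (\<Sum>j<K - 1 - i. c (i + j + 1) * X i * Y j)"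
    by (rule sum.mono_neutral_right) (use assms in auto)
qed

lemma sum_1_k: "(\<Sum>r\<in>{1..k}. g r) = (\<Sum>i<k. g (Suc i))"
  by (rule sum.reindex_bij_witness[where i=Suc and j="\<lambda>r. r - 1"]) auto

lemma T_HE: "(\<Sum>i<k. hh (1 + int i) * ((-1) ^ (k - 1 - i) * ee (k - 1 - i + 1))) = hh (1 + int k) - (-1) ^ k * ee (k + 1)"
proof -
  have "(\<Sum>i<k. hh (1 + int i) * ((-1) ^ (k - 1 - i) * ee (k - 1 - i + 1))) =
      (\<Sum>r\<in>{1..k}. hh (int r) * (-1) ^ (k - r) * ee (k + 1 - r))"
    unfolding sum_1_k by (rule sum.cong) (auto simp: mult.assoc Suc_diff_Suc)
  then show ?thesis using HE by simp
qed

lemma key_int: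
  fixes x y :: int
  assumes "y < x"
  shows "hseq (x - y) (shift y b) + (-1) ^ nat (x - y) * omega (hseq (x - y) (shift (1 - x) (dual_seq b)))
    + (\<Sum>z\<in>{y+1..x-1}. hseq (x - z) (shift z b) * ((-1) ^ nat (z - y) * omega (hseq (z - y) (shift (1 - z) (dual_seq b))))) = 0"
proof -
  define K where "K = nat (x - y)"
  define P where "P = PP b {y+1..x-1}"
  define X where "X i = hh (1 + int i)" for i
  define Y where "Y j = (-1) ^ j * ee (j + 1)" for j
  have degP: "degree P < K" unfolding P_def K_def using PP_degree[of "{y+1..x-1}" b] assms by simp
  have mid: "hseq (x - z) (shift z b) * ((-1) ^ nat (z - y) * omega (hseq (z - y) (shift (1 - z) (dual_seq b))))
      = - (\<Sum>i<K. \<Sum>j<K. scal (coeff (PP b {z+1..x-1}) i * coeff (PP b {y+1..z-1}) j) * X i * Y j)"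
    if z: "z \<in> {y+1..x-1}" for z
  proof -
    have n1: "nat (x - z - 1) < nat (x - z)" "nat (z - y - 1) < nat (z - y)" using z by (auto simp: nat_less_eq_zless)
    have d1: "degree (PP b {z+1..x-1}) < nat (x - z)"
      using PP_degree[of "{z+1..x-1}" b] n1(1) by (simp add: algebra_simps)
    have d2: "degree (PP b {y+1..z-1}) < nat (z - y)"
      using PP_degree[of "{y+1..z-1}" b] n1(2) by (simp add: algebra_simps)
    have k1: "nat (x - z) \<le> K" "nat (z - y) \<le> K" using z unfolding K_def by auto
    have e1: "hseq (x - z) (shift z b) = LLs (PP b {z+1..x-1}) K"
      using hseq_PP[of z x b] z LLs_ext[OF d1 k1(1)] by simp
    have e2: "(-1) ^ nat (z - y) * omega (hseq (z - y) (shift (1 - z) (dual_seq b))) = - OTs (PP b {y+1..z-1}) K"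
      using omega_hseq_PP[of y z b] z OTs_ext[OF d2 k1(2)] by simp
    have pr: "LLs (PP b {z+1..x-1}) K * OTs (PP b {y+1..z-1}) K =
        (\<Sum>i<K. \<Sum>j<K. scal (coeff (PP b {z+1..x-1}) i * coeff (PP b {y+1..z-1}) j) * X i * Y j)"
      unfolding LLs_def OTs_def sum_product X_def Y_def
      by (intro sum.cong refl) (simp add: scal_mult mult_ac)
    show ?thesis unfolding e1 e2 mult_minus_right pr ..
  qed
  have "(\<Sum>z\<in>{y+1..x-1}. hseq (x - z) (shift z b) * ((-1) ^ nat (z - y) * omega (hseq (z - y) (shift (1 - z) (dual_seq b)))))
      = - (\<Sum>z\<in>{y+1..x-1}. \<Sum>i<K. \<Sum>j<K. scal (coeff (PP b {z+1..x-1}) i * coeff (PP b {y+1..z-1}) j) * X i * Y j)"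
    by (simp add: mid sum_negf)
  also have "(\<Sum>z\<in>{y+1..x-1}. \<Sum>i<K. \<Sum>j<K. scal (coeff (PP b {z+1..x-1}) i * coeff (PP b {y+1..z-1}) j) * X i * Y j)
      = (\<Sum>i<K. \<Sum>j<K. scal (\<Sum>z\<in>{y+1..x-1}. coeff (PP b {z+1..x-1}) i * coeff (PP b {y+1..z-1}) j) * X i * Y j)"
    by (subst sum.swap, subst sum.swap) (simp add: scal_sum sum_distrib_right)
  also have "\<dots> = (\<Sum>i<K. \<Sum>j<K. scal (coeff P (i + j + 1)) * X i * Y j)"
    unfolding P_def using tele[OF assms] by simp
  also have "\<dots> = (\<Sum>k<K. scal (coeff P k) * (\<Sum>i<k. X i * Y (k - 1 - i)))"
    by (rule dsum) (use degP in \<open>auto simp: coeff_eq_0\<close>)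
  also have "\<dots> = (\<Sum>k<K. scal (coeff P k) * (hh (1 + int k) - (-1) ^ k * ee (k + 1)))"
    unfolding X_def Y_def T_HE ..
  also have "\<dots> = LLs P K - OTs P K"
    by (simp add: LLs_def OTs_def right_diff_distrib sum_subtractf mult_ac)
  finally have m: "(\<Sum>z\<in>{y+1..x-1}. hseq (x - z) (shift z b) * ((-1) ^ nat (z - y) * omega (hseq (z - y) (shift (1 - z) (dual_seq b)))))
      = - (LLs P K - OTs P K)" .
  have h1: "hseq (x - y) (shift y b) = LLs P K" unfolding P_def K_def by (rule hseq_PP[OF assms])
  have h2: "(-1) ^ nat (x - y) * omega (hseq (x - y) (shift (1 - x) (dual_seq b))) = - OTs P K"
    unfolding P_def K_def by (rule omega_hseq_PP[OF assms])
  show ?thesis unfolding m h1 h2 by simp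
qed


lemma strict_mono_self:
  assumes mono: "\<forall>i j. i < j \<longrightarrow> j < n \<longrightarrow> c i < (c j :: nat)" and bd: "\<forall>j<n. c j < n"
  shows "j < n \<Longrightarrow> c j = j"
proof -
  have lo: "j < n \<Longrightarrow> j \<le> c j" for j
  proof (induct j)
    case 0 then show ?case by simp
  next
    case (Suc j)
    then have "c j < c (Suc j)" using mono by auto
    then show ?case using Suc by simp
  qed
  have hi: "m < n \<Longrightarrow> c (n - 1 - m) \<le> n - 1 - m" for m
  proof (induct m)
    case 0
    then have "n - 1 < n" by simp
    then have "c (n - 1) < n" using bd by simp
    then show ?case by simp
  next
    case (Suc m)
    then have "c (n - 1 - Suc m) < c (n - 1 - m)" using mono by auto
    then show ?case using Suc by simp
  qed
  assume j: "j < n"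
  have "c j \<le> j" using hi[of "n - 1 - j"] j by simp
  then show "c j = j" using lo[OF j] by simp
qed

lemma unit_rows_det:
  fixes W :: "'a::comm_ring_1 mat"
  shows "W \<in> carrier_mat n n \<Longrightarrow> k \<le> n \<Longrightarrow>
   \<forall>i j. i < j \<longrightarrow> j < k \<longrightarrow> s i < s j \<Longrightarrow> \<forall>i<k. s i < n \<Longrightarrow>
   \<forall>i j. i < j \<longrightarrow> j < n - k \<longrightarrow> c i < c j \<Longrightarrow> \<forall>j<n-k. c j < n \<Longrightarrow>
   \<forall>i<k. \<forall>j<n-k. s i \<noteq> c j \<Longrightarrow>
   \<forall>r<k. \<forall>v<n. W $$ (r,v) = (if v = s r then 1 else 0) \<Longrightarrow>
   det W = (-1) ^ (\<Sum>r<k. s r - r) * det (mat (n-k) (n-k) (\<lambda>(i,j). W $$ (k+i, c j)))"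
proof (induct k arbitrary: n W s c)
  case 0
  have "mat n n (\<lambda>(i,j). W $$ (0+i, c j)) = W"
  proof (rule eq_matI)
    fix i j assume i: "i < dim_row W" and j: "j < dim_col W"
    have ij: "i < n" "j < n" using i j 0(1) by auto
    have "c j = j" by (rule strict_mono_self[of n c]) (use 0 ij in auto)
    then show "mat n n (\<lambda>(i,j). W $$ (0+i, c j)) $$ (i, j) = W $$ (i, j)" using ij by simp
  qed (use 0(1) in auto)
  then show ?case by simp
next
  case (Suc k)
  obtain n' where n: "n = Suc n'" using Suc(3) by (cases n) auto
  let ?s0 = "s 0"
  have s0: "?s0 < n" using Suc(5) by simp
  have row0: "\<And>v. v < n \<Longrightarrow> W $$ (0, v) = (if v = ?s0 then 1 else 0)" using Suc(9) by simp
  have "det W = (\<Sum>j<n. W $$ (0,j) * cofactor W 0 j)"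
    by (rule laplace_expansion_row[OF Suc(2)]) (simp add: n)
  also have "\<dots> = (\<Sum>j<n. if j = ?s0 then cofactor W 0 j else 0)"
    by (rule sum.cong) (auto simp: row0)
  also have "\<dots> = cofactor W 0 ?s0" using s0 by simp
  also have "\<dots> = (-1) ^ ?s0 * det (mat_delete W 0 ?s0)" by (simp add: cofactor_def)
  finally have dW: "det W = (-1) ^ ?s0 * det (mat_delete W 0 ?s0)" .
  define W' where "W' = mat_delete W 0 ?s0"
  have W'c: "W' \<in> carrier_mat n' n'" unfolding W'_def using mat_delete_carrier[OF Suc(2)] n by simp
  have W'i: "\<And>i j. i < n' \<Longrightarrow> j < n' \<Longrightarrow> W' $$ (i,j) = W $$ (Suc i, if j < ?s0 then j else Suc j)"
  proof -
    fix i j assume "i < n'" "j < n'"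
    moreover have "dim_row W = n" "dim_col W = n" using Suc(2) by auto
    ultimately show "W' $$ (i,j) = W $$ (Suc i, if j < ?s0 then j else Suc j)"
      unfolding W'_def mat_delete_def using n by simp
  qed
  define s' where "s' i = s (Suc i) - 1" for i
  define c' where "c' j = (if c j < ?s0 then c j else c j - 1)" for j
  have sgt: "\<And>i. i < k \<Longrightarrow> ?s0 < s (Suc i)"
  proof -
    fix i assume "i < k"
    then show "?s0 < s (Suc i)" using Suc(4)[rule_format, of 0 "Suc i"] by simp
  qed
  have cne: "\<And>j. j < n - Suc k \<Longrightarrow> c j \<noteq> ?s0"
  proof -
    fix j assume j: "j < n - Suc k"
    show "c j \<noteq> ?s0" using Suc(8)[rule_format, OF zero_less_Suc j] by simp
  qed
  have IH: "det W' = (-1) ^ (\<Sum>r<k. s' r - r) * det (mat (n'-k) (n'-k) (\<lambda>(i,j). W' $$ (k+i, c' j)))"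
  proof (rule Suc(1)[OF W'c])
    show "k \<le> n'" using Suc(3) n by simp
    show "\<forall>i j. i < j \<longrightarrow> j < k \<longrightarrow> s' i < s' j"
    proof (intro allI impI)
      fix i j assume ij: "i < j" "j < k"
      have "s (Suc i) < s (Suc j)" using Suc(4) ij by simp
      moreover have "s 0 < s (Suc i)" using sgt ij by simp
      ultimately show "s' i < s' j" unfolding s'_def by simp
    qed
    show "\<forall>i<k. s' i < n'"
    proof (intro allI impI)
      fix i assume i: "i < k"
      have "s (Suc i) < Suc n'" using Suc(5)[rule_format, of "Suc i"] i n by simp
      then show "s' i < n'" using sgt[OF i] unfolding s'_def by simp
    qed
    show "\<forall>i j. i < j \<longrightarrow> j < n' - k \<longrightarrow> c' i < c' j"
    proof (intro allI impI)
      fix i j assume ij: "i < j" "j < n' - k"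
      then have "c i < c j" using Suc(6) n by auto
      moreover have "c i \<noteq> ?s0" "c j \<noteq> ?s0" using cne ij n by auto
      ultimately show "c' i < c' j" unfolding c'_def by auto
    qed
    show "\<forall>j<n' - k. c' j < n'"
    proof (intro allI impI)
      fix j assume j: "j < n' - k"
      then have "c j < n" "c j \<noteq> ?s0" using Suc(7) cne n by auto
      then show "c' j < n'" unfolding c'_def using s0 n by auto
    qed
    show "\<forall>i<k. \<forall>j<n' - k. s' i \<noteq> c' j"
    proof (intro allI impI)
      fix i j assume i: "i < k" and j: "j < n' - k"
      have "s (Suc i) \<noteq> c j" using Suc(8) i j n by auto
      moreover have "c j \<noteq> ?s0" using cne j n by auto
      ultimately show "s' i \<noteq> c' j" using sgt[OF i] unfolding s'_def c'_def by auto
    qed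
    show "\<forall>r<k. \<forall>v<n'. W' $$ (r, v) = (if v = s' r then 1 else 0)"
    proof (intro allI impI)
      fix r v assume r: "r < k" and v: "v < n'"
      have "W' $$ (r, v) = W $$ (Suc r, if v < ?s0 then v else Suc v)" using W'i r v Suc(3) n by simp
      also have "\<dots> = (if (if v < ?s0 then v else Suc v) = s (Suc r) then 1 else 0)"
        using Suc(9) r v n by simp
      also have "\<dots> = (if v = s' r then 1 else 0)" using sgt[OF r] unfolding s'_def by auto
      finally show "W' $$ (r, v) = (if v = s' r then 1 else 0)" .
    qed
  qed
  have M: "mat (n'-k) (n'-k) (\<lambda>(i,j). W' $$ (k+i, c' j)) = mat (n - Suc k) (n - Suc k) (\<lambda>(i,j). W $$ (Suc k + i, c j))"
  proof (rule eq_matI)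
    fix i j assume i: "i < dim_row (mat (n - Suc k) (n - Suc k) (\<lambda>(i,j). W $$ (Suc k + i, c j)))"
      and j: "j < dim_col (mat (n - Suc k) (n - Suc k) (\<lambda>(i,j). W $$ (Suc k + i, c j)))"
    have cj: "c j < n" "c j \<noteq> ?s0" using Suc(7) cne i j by auto
    have c'j: "c' j < n'" using cj s0 n unfolding c'_def by auto
    have "(if c' j < ?s0 then c' j else Suc (c' j)) = c j" using cj unfolding c'_def by auto
    then show "mat (n'-k) (n'-k) (\<lambda>(i,j). W' $$ (k+i, c' j)) $$ (i, j) =
          mat (n - Suc k) (n - Suc k) (\<lambda>(i,j). W $$ (Suc k + i, c j)) $$ (i, j)"
      using i j n W'i[of "k+i" "c' j"] c'j by simp
  qed (use n in auto)
  have sig: "?s0 + (\<Sum>r<k. s' r - r) = (\<Sum>r<Suc k. s r - r)"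
  proof -
    have "(\<Sum>r<Suc k. s r - r) = (s 0 - 0) + (\<Sum>r<k. s (Suc r) - Suc r)"
      by (rule sum.lessThan_Suc_shift)
    also have "(\<Sum>r<k. s (Suc r) - Suc r) = (\<Sum>r<k. s' r - r)"
      unfolding s'_def by (rule sum.cong) auto
    finally show ?thesis by simp
  qed
  show ?case unfolding dW W'_def[symmetric] IH M sig[symmetric] by (simp add: power_add)
qed

lemma signof_sq: "(signof p :: 'a :: comm_ring_1) * signof p = 1"
  by (simp flip: of_int_mult)

lemma det_reverse:
  fixes A :: "'a::comm_ring_1 mat"
  assumes A: "A \<in> carrier_mat m m"
  shows "det (mat m m (\<lambda>(i,j). A $$ (m - 1 - i, m - 1 - j))) = det A"
proof -
  define p where "p i = (if i < m then m - 1 - i else i)" for i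
  have pp: "p permutes {0..<m}"
  proof (rule bij_imp_permutes)
    show "bij_betw p {0..<m} {0..<m}"
      by (rule bij_betw_byWitness[where f'=p]) (auto simp: p_def)
    show "\<And>x. x \<notin> {0..<m} \<Longrightarrow> p x = x" by (auto simp: p_def)
  qed
  define B where "B = mat m m (\<lambda>(i,j). A $$ (p i, j))"
  have B: "B \<in> carrier_mat m m" by (simp add: B_def)
  have dB: "det B = signof p * det A" unfolding B_def by (rule det_permute_rows[OF A pp])
  have "mat m m (\<lambda>(i,j). A $$ (m - 1 - i, m - 1 - j)) = transpose_mat (mat m m (\<lambda>(i,j). (transpose_mat B) $$ (p i, j)))"
    using A by (intro eq_matI) (auto simp: B_def p_def)
  moreover have "mat m m (\<lambda>(i,j). (transpose_mat B) $$ (p i, j)) \<in> carrier_mat m m" by simp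
  ultimately have "det (mat m m (\<lambda>(i,j). A $$ (m - 1 - i, m - 1 - j))) = det (mat m m (\<lambda>(i,j). (transpose_mat B) $$ (p i, j)))"
    using det_transpose by metis
  also have "\<dots> = signof p * det (transpose_mat B)"
    by (rule det_permute_rows[OF _ pp]) (use B in simp)
  also have "\<dots> = signof p * det B" using B by (simp add: det_transpose)
  also have "\<dots> = det A" unfolding dB by (simp add: mult.assoc[symmetric] signof_sq)
  finally show ?thesis .
qed

lemma det_signs:
  fixes X :: "'a::comm_ring_1 mat"
  assumes X: "X \<in> carrier_mat m m"
  shows "det (mat m m (\<lambda>(i,j). (-1) ^ (f i + g j) * X $$ (i,j))) = (-1) ^ (sum f {..<m} + sum g {..<m}) * det X"
proof -
  have "det (mat m m (\<lambda>(i,j). (-1) ^ (f i + g j) * X $$ (i,j))) =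
     (\<Sum>p\<in>{p. p permutes {0..<m}}. signof p * (\<Prod>i=0..<m. (-1) ^ (f i + g (p i)) * X $$ (i, p i)))"
    by (subst det_def'[of _ m]) (auto intro!: sum.cong prod.cong simp: permutes_in_image)
  also have "\<dots> = (\<Sum>p\<in>{p. p permutes {0..<m}}. (-1) ^ (sum f {..<m} + sum g {..<m}) * (signof p * (\<Prod>i=0..<m. X $$ (i, p i))))"
  proof (rule sum.cong[OF refl])
    fix p assume "p \<in> {p. p permutes {0..<m}}"
    then have p: "p permutes {0..<m}" by simp
    have sg: "sum (g \<circ> p) {0..<m} = sum g {0..<m}" using sum.permute[OF p, of g] by simp
    have "(\<Prod>i=0..<m. (-1) ^ (f i + g (p i)) * X $$ (i, p i)) =
        (\<Prod>i=0..<m. (-1::'a) ^ (f i + g (p i))) * (\<Prod>i=0..<m. X $$ (i, p i))"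
      by (rule prod.distrib)
    also have "(\<Prod>i=0..<m. (-1::'a) ^ (f i + g (p i))) = (-1) ^ (\<Sum>i=0..<m. f i + g (p i))"
      by (simp add: power_sum)
    also have "(\<Sum>i=0..<m. f i + g (p i)) = sum f {..<m} + sum g {..<m}"
      using sg by (simp add: sum.distrib atLeast0LessThan)
    finally show "signof p * (\<Prod>i=0..<m. (-1) ^ (f i + g (p i)) * X $$ (i, p i)) =
        (-1) ^ (sum f {..<m} + sum g {..<m}) * (signof p * (\<Prod>i=0..<m. X $$ (i, p i)))"
      by (simp add: mult_ac)
  qed
  also have "\<dots> = (-1) ^ (sum f {..<m} + sum g {..<m}) * det X"
    by (simp add: det_def'[OF X] sum_distrib_left)
  finally show ?thesis .
qed


lemma hseq_neg: "k < 0 \<Longrightarrow> hseq k b = 0" by (simp add: hseq_def)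
lemma hseq_zero[simp]: "hseq 0 b = 1" by (simp add: hseq_def)

definition AAm :: "(int \<Rightarrow> complex) \<Rightarrow> int \<Rightarrow> nat \<Rightarrow> sym mat" where
  "AAm b off n = mat n n (\<lambda>(u,v). hseq (int u - int v) (shift (int v - off) b))"

definition BBm :: "(int \<Rightarrow> complex) \<Rightarrow> int \<Rightarrow> nat \<Rightarrow> sym mat" where
  "BBm b off n = mat n n (\<lambda>(u,v). (-1) ^ (u + v) * omega (hseq (int u - int v) (shift (off + 1 - int u) (dual_seq b))))"

lemma neg1_sum_eq: "v \<le> w \<Longrightarrow> ((-1::'a::comm_ring_1) ^ (w + v)) = (-1) ^ (w - v)"
proof -
  assume "v \<le> w"
  then have "w + v = (w - v) + 2 * v" by simp
  then have "((-1::'a) ^ (w + v)) = (-1) ^ (w - v) * ((-1) ^ 2) ^ v" by (simp only: power_add power_mult)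
  then show ?thesis by simp
qed

lemma mult_entry:
  assumes "A \<in> carrier_mat n k" "B \<in> carrier_mat k m" "i < n" "j < m"
  shows "(A * B) $$ (i,j) = (\<Sum>w<k. A $$ (i,w) * B $$ (w,j))"
  using assms by (simp add: scalar_prod_def atLeast0LessThan)

lemma AB_entry:
  assumes u: "u < n" and v: "v < n"
  shows "(\<Sum>w<n. AAm b off n $$ (u,w) * BBm b off n $$ (w,v)) = (if u = v then 1 else 0)"
proof -
  define F where "F w = hseq (int u - int w) (shift (int w - off) b) *
      ((-1) ^ (w + v) * omega (hseq (int w - int v) (shift (off + 1 - int w) (dual_seq b))))" for w
  have S: "(\<Sum>w<n. AAm b off n $$ (u,w) * BBm b off n $$ (w,v)) = (\<Sum>w<n. F w)"
    by (rule sum.cong) (use u v in \<open>auto simp: AAm_def BBm_def F_def\<close>)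
  have Z1: "F w = 0" if "u < w" for w
    using that by (simp add: F_def hseq_neg)
  have Z2: "F w = 0" if "w < v" for w
    using that by (simp add: F_def hseq_neg)
  show ?thesis
  proof (cases "u < v")
    case True
    have "(\<Sum>w<n. F w) = 0"
    proof (rule sum.neutral, intro ballI)
      fix w assume "w \<in> {..<n}"
      show "F w = 0" using Z1[of w] Z2[of w] True by linarith
    qed
    then show ?thesis unfolding S using True by simp
  next
    case False
    show ?thesis
    proof (cases "u = v")
      case True
      have "(\<Sum>w<n. F w) = (\<Sum>w\<in>{u}. F w)"
      proof (rule sum.mono_neutral_right)
        show "\<forall>w\<in>{..<n} - {u}. F w = 0"
        proof
          fix w assume "w \<in> {..<n} - {u}"
          then have "w < u \<or> u < w" by auto
          then show "F w = 0" using Z1 Z2 True by auto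
        qed
      qed (use u in auto)
      also have "\<dots> = 1" using True by (simp add: F_def flip: mult_2)
      finally show ?thesis unfolding S using True by simp
    next
      case uv: False
      then have vu: "v < u" using False by simp
      define x where "x = int u - off"
      define y where "y = int v - off"
      have yx: "y < x" using vu unfolding x_def y_def by simp
      have "(\<Sum>w<n. F w) = (\<Sum>w\<in>{v..u}. F w)"
        by (rule sum.mono_neutral_right) (use u Z1 Z2 in auto)
      also have "{v..u} = insert u (insert v {v<..<u})" using vu by auto
      also have "(\<Sum>w\<in>insert u (insert v {v<..<u}). F w) = F u + (F v + (\<Sum>w\<in>{v<..<u}. F w))"
        using vu by (simp add: sum.insert)
      finally have s1: "(\<Sum>w<n. F w) = F u + (F v + (\<Sum>w\<in>{v<..<u}. F w))" .
      have Fu: "F u = (-1) ^ nat (x - y) * omega (hseq (x - y) (shift (1 - x) (dual_seq b)))"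
      proof -
        have "nat (x - y) = u - v" unfolding x_def y_def using vu by simp
        moreover have "(-1::sym) ^ (u + v) = (-1) ^ (u - v)" using vu by (simp add: neg1_sum_eq)
        moreover have e3: "int u - int v = x - y" "off + 1 - int u = 1 - x" unfolding x_def y_def by simp_all
        ultimately show ?thesis unfolding F_def e3 by simp
      qed
      have Fv: "F v = hseq (x - y) (shift y b)"
      proof -
        have "(-1::sym) ^ (v + v) = 1" by (simp flip: mult_2 add: power_mult)
        moreover have "int u - int v = x - y" "int v - off = y" unfolding x_def y_def by simp_all
        ultimately show ?thesis unfolding F_def by (simp add: omega_one)
      qed
      have Fm: "(\<Sum>w\<in>{v<..<u}. F w) = (\<Sum>z\<in>{y+1..x-1}. hseq (x - z) (shift z b) *
            ((-1) ^ nat (z - y) * omega (hseq (z - y) (shift (1 - z) (dual_seq b)))))"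
      proof (rule sum.reindex_bij_witness[where i="\<lambda>z. nat (z + off)" and j="\<lambda>w. int w - off"])
        fix w assume w: "w \<in> {v<..<u}"
        show "nat (int w - off + off) = w" by simp
        show "int w - off \<in> {y+1..x-1}" using w unfolding x_def y_def by auto
        have pw: "(-1::sym) ^ (w + v) = (-1) ^ (w - v)" using w by (simp add: neg1_sum_eq)
        have nt: "nat (int w - off - y) = w - v" using w unfolding y_def by auto
        have e4: "int u - int w = x - (int w - off)" "int w - int v = (int w - off) - y"
            "off + 1 - int w = 1 - (int w - off)" unfolding x_def y_def by simp_all
        show "hseq (x - (int w - off)) (shift (int w - off) b) *
            ((-1) ^ nat (int w - off - y) * omega (hseq (int w - off - y) (shift (1 - (int w - off)) (dual_seq b)))) = F w"
          unfolding F_def e4 pw nt ..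
      next
        fix z assume z: "z \<in> {y+1..x-1}"
        show "int (nat (z + off)) - off = z" using z unfolding y_def by auto
        show "nat (z + off) \<in> {v<..<u}" using z unfolding x_def y_def by auto
      qed
      have "(\<Sum>w<n. F w) = 0"
        unfolding s1 Fu Fv Fm using key_int[OF yx, of b] by (simp add: algebra_simps)
      then show ?thesis unfolding S using uv by simp
    qed
  qed
qed

lemma AB_one: "AAm b off n * BBm b off n = 1\<^sub>m n"
proof (rule eq_matI)
  fix i j assume i: "i < dim_row (1\<^sub>m n :: sym mat)" and j: "j < dim_col (1\<^sub>m n :: sym mat)"
  have "(AAm b off n * BBm b off n) $$ (i, j) = (\<Sum>w<n. AAm b off n $$ (i,w) * BBm b off n $$ (w,j))"
    by (rule mult_entry) (use i j in \<open>auto simp: AAm_def BBm_def\<close>)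
  also have "\<dots> = (if i = j then 1 else 0)" by (rule AB_entry) (use i j in auto)
  finally show "(AAm b off n * BBm b off n) $$ (i, j) = 1\<^sub>m n $$ (i, j)" using i j by simp
qed (auto simp: AAm_def BBm_def)

lemma BBm_carrier: "BBm b off n \<in> carrier_mat n n" by (simp add: BBm_def)
lemma AAm_carrier: "AAm b off n \<in> carrier_mat n n" by (simp add: AAm_def)

lemma det_BBm: "det (BBm b off n) = 1"
proof -
  have "det (BBm b off n) = prod_list (diag_mat (BBm b off n))"
    by (rule det_lower_triangular[OF _ BBm_carrier]) (auto simp: BBm_def hseq_neg)
  also have "diag_mat (BBm b off n) = map (\<lambda>_. 1) [0..<n]"
    unfolding diag_mat_def by (auto simp: BBm_def omega_one simp flip: mult_2 simp: power_mult)
  also have "prod_list (map (\<lambda>_. 1::sym) [0..<n]) = 1" by (induct n) auto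
  finally show ?thesis .
qed


definition cnt :: "nat list \<Rightarrow> nat \<Rightarrow> nat" where
  "cnt \<mu> j = card {i. i < length \<mu> \<and> Suc j \<le> \<mu> ! i}"

lemma conj_part_length: "\<mu> \<noteq> [] \<Longrightarrow> length (conj_part \<mu>) = hd \<mu>"
  by (simp add: conj_part_def)

lemma conj_part_nth: "\<mu> \<noteq> [] \<Longrightarrow> j < hd \<mu> \<Longrightarrow> conj_part \<mu> ! j = cnt \<mu> j"
  by (simp del: upt_Suc add: conj_part_def cnt_def length_filter_conv_card)

locale part =
  fixes \<mu> :: "nat list"
  assumes P: "partition \<mu>" and ne: "\<mu> \<noteq> []"
begin

abbreviation "N \<equiv> length \<mu>"
abbreviation "M \<equiv> hd \<mu>"

lemma mono: "q \<le> q' \<Longrightarrow> q' < N \<Longrightarrow> \<mu> ! q' \<le> \<mu> ! q"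
proof -
  assume a: "q \<le> q'" "q' < N"
  show ?thesis
  proof (cases "q = q'")
    case True then show ?thesis by simp
  next
    case False
    then have "q < q'" using a by simp
    then show ?thesis using P a unfolding partition_def by (auto dest: sorted_wrt_nth_less)
  qed
qed

lemma pos: "q < N \<Longrightarrow> 1 \<le> \<mu> ! q"
proof -
  assume "q < N"
  then have "\<mu> ! q \<in> set \<mu>" by simp
  moreover have "0 \<notin> set \<mu>" using P unfolding partition_def by simp
  ultimately have "\<mu> ! q \<noteq> 0" by metis
  then show ?thesis by simp
qed

lemma hd_nth: "M = \<mu> ! 0" using ne by (simp add: hd_conv_nth)

lemma bound: "q < N \<Longrightarrow> \<mu> ! q \<le> M"
  using mono[of 0 q] hd_nth by simp

lemma M_pos: "1 \<le> M" using pos[of 0] ne hd_nth by simp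

lemma cnt_le: "cnt \<mu> j \<le> N"
proof -
  have "{i. i < N \<and> Suc j \<le> \<mu> ! i} \<subseteq> {..<N}" by auto
  then have "card {i. i < N \<and> Suc j \<le> \<mu> ! i} \<le> card {..<N}" by (rule card_mono[rotated]) simp
  then show ?thesis unfolding cnt_def by simp
qed

lemma cnt_anti: "j \<le> j' \<Longrightarrow> cnt \<mu> j' \<le> cnt \<mu> j"
proof -
  assume "j \<le> j'"
  then have "{i. i < N \<and> Suc j' \<le> \<mu> ! i} \<subseteq> {i. i < N \<and> Suc j \<le> \<mu> ! i}" by auto
  then show ?thesis unfolding cnt_def by (rule card_mono[rotated]) simp
qed

lemma L1: "q < N \<Longrightarrow> Suc j \<le> \<mu> ! q \<Longrightarrow> Suc q \<le> cnt \<mu> j"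
proof -
  assume q: "q < N" "Suc j \<le> \<mu> ! q"
  have "{..q} \<subseteq> {i. i < N \<and> Suc j \<le> \<mu> ! i}"
  proof
    fix i assume "i \<in> {..q}"
    then have "i \<le> q" by simp
    then show "i \<in> {i. i < N \<and> Suc j \<le> \<mu> ! i}" using mono[of i q] q by auto
  qed
  then have "card {..q} \<le> card {i. i < N \<and> Suc j \<le> \<mu> ! i}" by (rule card_mono[rotated]) simp
  then show ?thesis unfolding cnt_def by simp
qed

lemma L2: "q < N \<Longrightarrow> \<mu> ! q \<le> j \<Longrightarrow> cnt \<mu> j \<le> q"
proof -
  assume q: "q < N" "\<mu> ! q \<le> j"
  have "{i. i < N \<and> Suc j \<le> \<mu> ! i} \<subseteq> {..<q}"
  proof
    fix i assume i: "i \<in> {i. i < N \<and> Suc j \<le> \<mu> ! i}"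
    show "i \<in> {..<q}"
    proof (rule ccontr)
      assume "i \<notin> {..<q}"
      then have "q \<le> i" by simp
      then have "\<mu> ! i \<le> \<mu> ! q" using mono[of q i] i by simp
      then show False using i q by simp
    qed
  qed
  then have "card {i. i < N \<and> Suc j \<le> \<mu> ! i} \<le> card {..<q}" by (rule card_mono[rotated]) simp
  then show ?thesis unfolding cnt_def by simp
qed

definition sr :: "nat \<Rightarrow> nat" where "sr r = cnt \<mu> (M - 1 - r) + r"
definition cq :: "nat \<Rightarrow> nat" where "cq q = M + q - \<mu> ! q"

lemma sr_mono: "\<forall>i j. i < j \<longrightarrow> j < M \<longrightarrow> sr i < sr j"
proof (intro allI impI)
  fix i j assume "i < j" "j < M"
  then have "cnt \<mu> (M - 1 - i) \<le> cnt \<mu> (M - 1 - j)" by (intro cnt_anti) simp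
  then show "sr i < sr j" unfolding sr_def using \<open>i < j\<close> by simp
qed

lemma sr_bd: "\<forall>i<M. sr i < M + N"
  using cnt_le unfolding sr_def by (metis add.commute add_less_le_mono)

lemma cq_mono: "\<forall>i j. i < j \<longrightarrow> j < N \<longrightarrow> cq i < cq j"
proof (intro allI impI)
  fix i j assume "i < j" "j < N"
  then have "\<mu> ! j \<le> \<mu> ! i" "\<mu> ! i \<le> M" "\<mu> ! j \<le> M" using mono[of i j] bound by auto
  then show "cq i < cq j" unfolding cq_def using \<open>i < j\<close> by simp
qed

lemma cq_bd: "\<forall>j<N. cq j < M + N"
proof (intro allI impI)
  fix j assume "j < N"
  then have "1 \<le> \<mu> ! j" "\<mu> ! j \<le> M" using pos bound by auto
  then show "cq j < M + N" unfolding cq_def using \<open>j < N\<close> by simp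
qed

lemma disj: "\<forall>i<M. \<forall>j<N. sr i \<noteq> cq j"
proof (intro allI impI)
  fix r q assume r: "r < M" and q: "q < N"
  define j where "j = M - 1 - r"
  have jM: "j < M" "r = M - 1 - j" using r M_pos unfolding j_def by auto
  have b: "\<mu> ! q \<le> M" using bound q by simp
  show "sr r \<noteq> cq q"
  proof (cases "Suc j \<le> \<mu> ! q")
    case True
    have "Suc q \<le> cnt \<mu> j" using L1[OF q True] .
    then show ?thesis unfolding sr_def cq_def j_def[symmetric] using jM b True by linarith
  next
    case False
    have "cnt \<mu> j \<le> q" using L2[OF q] False by simp
    then show ?thesis unfolding sr_def cq_def j_def[symmetric] using jM b False by linarith
  qed
qed

lemma cover: "sr ` {..<M} \<union> cq ` {..<N} = {..<M + N}"
proof (rule card_subset_eq)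
  show "finite {..<M + N}" by simp
  show "sr ` {..<M} \<union> cq ` {..<N} \<subseteq> {..<M + N}" using sr_bd cq_bd by auto
  have i1: "inj_on sr {..<M}"
    by (rule inj_onI) (metis lessThan_iff nat_neq_iff sr_mono)
  have i2: "inj_on cq {..<N}"
    by (rule inj_onI) (metis lessThan_iff nat_neq_iff cq_mono)
  have d: "sr ` {..<M} \<inter> cq ` {..<N} = {}" using disj by auto
  have "card (sr ` {..<M} \<union> cq ` {..<N}) = card (sr ` {..<M}) + card (cq ` {..<N})"
    by (rule card_Un_disjoint) (use d in auto)
  also have "\<dots> = M + N" using card_image[OF i1] card_image[OF i2] by simp
  finally show "card (sr ` {..<M} \<union> cq ` {..<N}) = card {..<M + N}" by simp
qed

lemma sum_sc: "(\<Sum>r<M. sr r) + (\<Sum>q<N. cq q) = (\<Sum>u<M + N. u)"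
proof -
  have i1: "inj_on sr {..<M}"
    by (rule inj_onI) (metis lessThan_iff nat_neq_iff sr_mono)
  have i2: "inj_on cq {..<N}"
    by (rule inj_onI) (metis lessThan_iff nat_neq_iff cq_mono)
  have d: "sr ` {..<M} \<inter> cq ` {..<N} = {}" using disj by auto
  have "(\<Sum>u<M + N. u) = (\<Sum>u\<in>sr ` {..<M}. u) + (\<Sum>u\<in>cq ` {..<N}. u)"
    unfolding cover[symmetric] by (rule sum.union_disjoint) (use d in auto)
  also have "\<dots> = (\<Sum>r<M. sr r) + (\<Sum>q<N. cq q)"
    using sum.reindex[OF i1, of id] sum.reindex[OF i2, of id] by simp
  finally show ?thesis by simp
qed

lemma parity: "even ((\<Sum>r<M. sr r - r) + ((\<Sum>i<N. M + i) + (\<Sum>q<N. cq q)))"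
proof -
  have split: "(\<Sum>u<M + N. u) = (\<Sum>r<M. r) + (\<Sum>i<N. M + i)"
  proof -
    have "{..<M + N} = {..<M} \<union> {M..<M + N}" by auto
    moreover have "(\<Sum>u\<in>{..<M} \<union> {M..<M + N}. u) = (\<Sum>r<M. r) + (\<Sum>u\<in>{M..<M + N}. u)"
      by (rule sum.union_disjoint) auto
    ultimately have "(\<Sum>u<M + N. u) = (\<Sum>r<M. r) + (\<Sum>u\<in>{M..<M + N}. u)" by simp
    also have "(\<Sum>u\<in>{M..<M + N}. u) = (\<Sum>i<N. M + i)"
      using sum.shift_bounds_nat_ivl[of id 0 M N] by (simp add: atLeast0LessThan add.commute)
    finally show ?thesis .
  qed
  have ge: "\<And>r. r \<in> {..<M} \<Longrightarrow> r \<le> sr r" unfolding sr_def by simp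
  have "(\<Sum>r<M. sr r - r) = (\<Sum>r<M. sr r) - (\<Sum>r<M. r)"
    by (rule sum_subtractf_nat[OF ge])
  moreover have "(\<Sum>r<M. r) \<le> (\<Sum>r<M. sr r)" by (rule sum_mono) (simp add: sr_def)
  ultimately have eq: "(\<Sum>r<M. sr r - r) + ((\<Sum>i<N. M + i) + (\<Sum>q<N. cq q)) = 2 * (\<Sum>i<N. M + i)"
    using sum_sc split by linarith
  show ?thesis unfolding eq by (rule dvd_triv_left)
qed

end


lemma dual_dual: "dual_seq (dual_seq a) = a"
  by (simp add: dual_seq_def)

lemma main_ne:
  fixes a :: "int \<Rightarrow> complex" and \<mu> :: "nat list"
  assumes P: "partition \<mu>" and ne: "\<mu> \<noteq> []"
  shows "schur_seq (conj_part \<mu>) (dual_seq a) = omega (schur_seq \<mu> a)"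
proof -
  interpret part \<mu> by unfold_locales (fact P, fact ne)
  define mm where "mm = hd \<mu>"
  define kk where "kk = length \<mu>"
  define nn where "nn = mm + kk"
  define \<nu> where "\<nu> = conj_part \<mu>"
  define b where "b = dual_seq a"
  define off where "off = int mm - 1"
  define AA where "AA = AAm b off nn"
  define BB where "BB = BBm b off nn"
  have lnu: "length \<nu> = mm" unfolding \<nu>_def mm_def using conj_part_length[OF ne] .
  have mpos: "1 \<le> mm" unfolding mm_def using M_pos .
  define Snu where "Snu = mat mm mm (\<lambda>(i,j). hseq (int (\<nu> ! i) - int i + int j) (shift (- int j) b))"
  define Smu where "Smu = mat kk kk (\<lambda>(i,j). hseq (int (\<mu> ! i) - int i + int j) (shift (- int j) a))"
  have sch1: "schur_seq \<nu> b = det Snu" unfolding schur_seq_def Snu_def lnu ..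
  have sch2: "schur_seq \<mu> a = det Smu" unfolding schur_seq_def Smu_def kk_def ..
  have Snu_c: "Snu \<in> carrier_mat mm mm" by (simp add: Snu_def)
  have Smu_c: "Smu \<in> carrier_mat kk kk" by (simp add: Smu_def)
  have AA_c: "AA \<in> carrier_mat nn nn" by (simp add: AA_def AAm_carrier)
  have BB_c: "BB \<in> carrier_mat nn nn" by (simp add: BB_def BBm_carrier)
  have AB: "AA * BB = 1\<^sub>m nn" unfolding AA_def BB_def by (rule AB_one)
  have srbd: "\<And>r. r < mm \<Longrightarrow> sr r < nn" using sr_bd unfolding nn_def mm_def kk_def by simp
  define X11 where "X11 = mat mm mm (\<lambda>(r,v). AA $$ (sr r, v))"
  define X12 where "X12 = mat mm kk (\<lambda>(r,v). AA $$ (sr r, mm + v))"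
  have X11_rev: "X11 = mat mm mm (\<lambda>(i,j). Snu $$ (mm - 1 - i, mm - 1 - j))"
  proof (rule eq_matI)
    fix r v assume r: "r < dim_row (mat mm mm (\<lambda>(i,j). Snu $$ (mm - 1 - i, mm - 1 - j)))"
      and v: "v < dim_col (mat mm mm (\<lambda>(i,j). Snu $$ (mm - 1 - i, mm - 1 - j)))"
    then have r': "r < mm" and v': "v < mm" by auto
    have nu_eq: "\<nu> ! (mm - 1 - r) = cnt \<mu> (mm - 1 - r)"
      unfolding \<nu>_def mm_def using conj_part_nth[OF ne, of "hd \<mu> - 1 - r"] r' mm_def by simp
    have e1: "int (sr r) - int v = int (\<nu> ! (mm - 1 - r)) - int (mm - 1 - r) + int (mm - 1 - v)"
      unfolding nu_eq sr_def mm_def[symmetric] using r' v' by simp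
    have e2: "int v - off = - int (mm - 1 - v)" unfolding off_def using v' by simp
    have "X11 $$ (r, v) = hseq (int (sr r) - int v) (shift (int v - off) b)"
      unfolding X11_def AA_def AAm_def using r' v' srbd[OF r'] nn_def by simp
    also have "\<dots> = Snu $$ (mm - 1 - r, mm - 1 - v)"
      unfolding e1 e2 Snu_def using r' v' by simp
    finally show "X11 $$ (r, v) = mat mm mm (\<lambda>(i,j). Snu $$ (mm - 1 - i, mm - 1 - j)) $$ (r, v)"
      using r' v' by simp
  qed (auto simp: X11_def)
  have dX11: "det X11 = det Snu" unfolding X11_rev by (rule det_reverse[OF Snu_c])
  define Z where "Z = four_block_mat X11 X12 (0\<^sub>m kk mm) (1\<^sub>m kk)"
  have Z_c: "Z \<in> carrier_mat nn nn" unfolding Z_def nn_def by (rule four_block_carrier_mat) (simp_all add: X11_def)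
  have dZ: "det Z = det X11"
    unfolding Z_def by (subst det_four_block_mat_lower_left_zero[of _ mm _ kk]) (auto simp: X11_def X12_def)
  have Zi: "Z $$ (r, w) = (if r < mm then AA $$ (sr r, w) else (if r = w then 1 else 0))"
    if r: "r < nn" and w: "w < nn" for r w
    using r w unfolding Z_def nn_def by (auto simp: X11_def X12_def)
  define W where "W = Z * BB"
  have W_c: "W \<in> carrier_mat nn nn" unfolding W_def using Z_c BB_c by simp
  have dBB: "det BB = 1" unfolding BB_def by (rule det_BBm)
  have dW: "det W = det Z" unfolding W_def det_mult[OF Z_c BB_c] dBB by simp
  have Wtop: "W $$ (r, v) = (if v = sr r then 1 else 0)" if r: "r < mm" and v: "v < nn" for r v
  proof -
    have rn: "r < nn" using r nn_def by simp
    have "W $$ (r, v) = (\<Sum>w<nn. Z $$ (r, w) * BB $$ (w, v))"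
      unfolding W_def by (rule mult_entry[OF Z_c BB_c rn v])
    also have "\<dots> = (\<Sum>w<nn. AA $$ (sr r, w) * BB $$ (w, v))"
      by (rule sum.cong) (use r rn Zi in auto)
    also have "\<dots> = (AA * BB) $$ (sr r, v)"
      by (rule mult_entry[symmetric, OF AA_c BB_c srbd[OF r] v])
    also have "\<dots> = (if v = sr r then 1 else 0)" unfolding AB using srbd[OF r] v by auto
    finally show ?thesis .
  qed
  have Wbot: "W $$ (mm + i, v) = BB $$ (mm + i, v)" if i: "i < kk" and v: "v < nn" for i v
  proof -
    have rn: "mm + i < nn" using i nn_def by simp
    have "W $$ (mm + i, v) = (\<Sum>w<nn. Z $$ (mm + i, w) * BB $$ (w, v))"
      unfolding W_def by (rule mult_entry[OF Z_c BB_c rn v])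
    also have "\<dots> = (\<Sum>w<nn. if w = mm + i then BB $$ (w, v) else 0)"
      by (rule sum.cong) (use rn Zi in auto)
    also have "\<dots> = BB $$ (mm + i, v)" using rn by simp
    finally show ?thesis .
  qed
  have UR: "det W = (-1) ^ (\<Sum>r<mm. sr r - r) * det (mat (nn - mm) (nn - mm) (\<lambda>(i,j). W $$ (mm + i, cq j)))"
  proof (rule unit_rows_det[OF W_c])
    show "mm \<le> nn" unfolding nn_def by simp
    show "\<forall>i j. i < j \<longrightarrow> j < mm \<longrightarrow> sr i < sr j" using sr_mono unfolding mm_def .
    show "\<forall>i<mm. sr i < nn" using srbd by simp
    show "\<forall>i j. i < j \<longrightarrow> j < nn - mm \<longrightarrow> cq i < cq j" using cq_mono unfolding nn_def kk_def by simp
    show "\<forall>j<nn - mm. cq j < nn" using cq_bd unfolding nn_def kk_def mm_def by simp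
    show "\<forall>i<mm. \<forall>j<nn - mm. sr i \<noteq> cq j" using disj unfolding nn_def kk_def mm_def by simp
    show "\<forall>r<mm. \<forall>v<nn. W $$ (r, v) = (if v = sr r then 1 else 0)" using Wtop by simp
  qed
  define f where "f i = mm + i" for i
  define T where "T = transpose_mat (map_mat omega Smu)"
  have T_c: "T \<in> carrier_mat kk kk" unfolding T_def using Smu_c by simp
  have bot: "mat (nn - mm) (nn - mm) (\<lambda>(i,j). W $$ (mm + i, cq j)) =
      mat kk kk (\<lambda>(i,j). (-1) ^ (f i + cq j) * T $$ (i,j))"
  proof (rule eq_matI)
    fix i j assume i: "i < dim_row (mat kk kk (\<lambda>(i,j). (-1) ^ (f i + cq j) * T $$ (i,j)))"
      and j: "j < dim_col (mat kk kk (\<lambda>(i,j). (-1) ^ (f i + cq j) * T $$ (i,j)))"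
    then have i': "i < kk" and j': "j < kk" by auto
    have cqn: "cq j < nn" using cq_bd j' unfolding nn_def kk_def mm_def by simp
    have bj: "\<mu> ! j \<le> mm" using bound j' unfolding kk_def mm_def by simp
    have e1: "int (mm + i) - int (cq j) = int (\<mu> ! j) - int j + int i"
      unfolding cq_def mm_def[symmetric] using bj by simp
    have e2: "off + 1 - int (mm + i) = - int i" unfolding off_def by simp
    have "W $$ (mm + i, cq j) = BB $$ (mm + i, cq j)" using Wbot[OF i' cqn] .
    also have "\<dots> = (-1) ^ (mm + i + cq j) * omega (hseq (int (mm + i) - int (cq j)) (shift (off + 1 - int (mm + i)) (dual_seq b)))"
      unfolding BB_def BBm_def using i' cqn nn_def by simp
    also have "\<dots> = (-1) ^ (f i + cq j) * T $$ (i, j)"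
      unfolding e1 e2 b_def dual_dual T_def f_def Smu_def using i' j' by simp
    finally show "mat (nn - mm) (nn - mm) (\<lambda>(i,j). W $$ (mm + i, cq j)) $$ (i, j) =
        mat kk kk (\<lambda>(i,j). (-1) ^ (f i + cq j) * T $$ (i,j)) $$ (i, j)"
      using i' j' nn_def by simp
  qed (auto simp: nn_def)
  have dbot: "det (mat kk kk (\<lambda>(i,j). (-1) ^ (f i + cq j) * T $$ (i,j))) =
      (-1) ^ (sum f {..<kk} + sum cq {..<kk}) * omega (det Smu)"
  proof -
    have c: "map_mat omega Smu \<in> carrier_mat kk kk" using Smu_c by simp
    have "det T = det (map_mat omega Smu)" unfolding T_def by (rule det_transpose[OF c])
    also have "\<dots> = omega (det Smu)" by (rule omega_hom.hom_det)
    finally have "det T = omega (det Smu)" .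
    then show ?thesis using det_signs[OF T_c, of f cq] by simp
  qed
  have ev: "even ((\<Sum>r<mm. sr r - r) + (sum f {..<kk} + sum cq {..<kk}))"
    using parity unfolding f_def mm_def kk_def .
  have "det Snu = (-1) ^ ((\<Sum>r<mm. sr r - r) + (sum f {..<kk} + sum cq {..<kk})) * omega (det Smu)"
    using UR unfolding dW dZ dX11 bot dbot by (simp add: power_add)
  also have "\<dots> = omega (det Smu)" using ev by simp
  finally show ?thesis unfolding \<nu>_def[symmetric] b_def[symmetric] sch1 sch2 .
qed

theorem theorem4:
  fixes a :: "int \<Rightarrow> complex" and \<mu> :: "nat list"
  assumes "partition \<mu>"
  shows "omega (schur_seq \<mu> a) = schur_seq (conj_part \<mu>) (dual_seq a)"
proof (cases "\<mu> = []")
  case True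
  have "schur_seq [] a = 1" "schur_seq [] (dual_seq a) = 1"
    by (simp_all add: schur_seq_def)
  then show ?thesis using True by (simp add: conj_part_def omega_one)
next
  case False
  then show ?thesis using main_ne[OF assms False] by simp
qed


end
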